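(* Let $P$ be a poset, $\mathcal{U}$ a join-specification for $P$, and $S\subseteq P$. Then $\Upsilon_{\mathcal{U}}(S)$ is the smallest $\mathcal{U}$-ideal containing $S$ if and only if $\Upsilon_{\mathcal{U}}(S)$ is down-closed.
   Context: For $S\subseteq P$, $S^\downarrow=\{p\in P:p\le s\text{ for some }s\in S\}$. A join-specification for $P$ is a set $\mathcal{U}\subseteq\wp(P)$ such that $\bigvee S$ exists in $P$ for every $S\in\mathcal{U}$ and $\{p\}\in\mathcal{U}$ for every $p\in P$. A $\mathcal{U}$-ideal is a down-closed $C\subseteq P$ with $\bigvee S\in C$ whenever $S\in\mathcal{U}$, $S\subseteq C$; $\Gamma_{\mathcal{U}}(S)$ is the smallest $\mathcal{U}$-ideal containing $S$. $\mathcal{U}^+=\{S\subseteq P:\bigvee S\text{ exists and }\bigvee S\in\Gamma_{\mathcal{U}}(S)\}$, and $\Upsilon_{\mathcal{U}}(S)=\{\bigvee T:T\in\mathcal{U}^+,\ T\subseteq S^\downarrow\}$. *)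

theory Defs
  imports Main
begin

text \<open>The poset P is the carrier type 'a with its partial order (class order).\<close>

definition is_join :: "'a::order set \<Rightarrow> 'a \<Rightarrow> bool" where
  "is_join S x \<longleftrightarrow> (\<forall>s\<in>S. s \<le> x) \<and> (\<forall>y. (\<forall>s\<in>S. s \<le> y) \<longrightarrow> x \<le> y)"

definition has_join :: "'a::order set \<Rightarrow> bool" where
  "has_join S \<longleftrightarrow> (\<exists>x. is_join S x)"

definition join :: "'a::order set \<Rightarrow> 'a" where
  "join S = (THE x. is_join S x)"

definition join_spec :: "'a::order set set \<Rightarrow> bool" where
  "join_spec U \<longleftrightarrow> (\<forall>S\<in>U. has_join S) \<and> (\<forall>p. {p} \<in> U)"

definition down_closed :: "'a::order set \<Rightarrow> bool" where
  "down_closed C \<longleftrightarrow> (\<forall>x y. y \<in> C \<longrightarrow> x \<le> y \<longrightarrow> x \<in> C)"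

definition U_ideal :: "'a::order set set \<Rightarrow> 'a set \<Rightarrow> bool" where
  "U_ideal U C \<longleftrightarrow> down_closed C \<and> (\<forall>S\<in>U. S \<subseteq> C \<longrightarrow> join S \<in> C)"

definition Gamma :: "'a::order set set \<Rightarrow> 'a set \<Rightarrow> 'a set" where
  "Gamma U S = \<Inter>{C. U_ideal U C \<and> S \<subseteq> C}"

definition Uplus :: "'a::order set set \<Rightarrow> 'a set set" where
  "Uplus U = {S. has_join S \<and> join S \<in> Gamma U S}"

definition down :: "'a::order set \<Rightarrow> 'a set" where
  "down S = {p. \<exists>s\<in>S. p \<le> s}"

definition Upsilon :: "'a::order set set \<Rightarrow> 'a set \<Rightarrow> 'a set" where
  "Upsilon U S = {join T | T. T \<in> Uplus U \<and> T \<subseteq> down S}"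

end

theory Submission
  imports Defs
begin

lemma is_join_unique: "is_join S x \<Longrightarrow> is_join S y \<Longrightarrow> x = (y::'a::order)"
  unfolding is_join_def by (meson order_antisym)

lemma join_eq: "is_join S x \<Longrightarrow> join S = x"
  unfolding join_def using is_join_unique by blast

lemma has_join_is_join: "has_join S \<Longrightarrow> is_join S (join S)"
  unfolding has_join_def using join_eq by metis

lemma Gamma_mem: "(x \<in> Gamma U T) \<longleftrightarrow> (\<forall>C. U_ideal U C \<and> T \<subseteq> C \<longrightarrow> x \<in> C)"
  unfolding Gamma_def by blast

theorem lemma3p6:
  fixes U :: "'a::order set set" and S :: "'a set"
  assumes "join_spec U"
  shows "(U_ideal U (Upsilon U S) \<and> S \<subseteq> Upsilon U S \<and>
          (\<forall>C. U_ideal U C \<and> S \<subseteq> C \<longrightarrow> Upsilon U S \<subseteq> C))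
         \<longleftrightarrow> down_closed (Upsilon U S)"
proof
  assume "U_ideal U (Upsilon U S) \<and> S \<subseteq> Upsilon U S \<and>
          (\<forall>C. U_ideal U C \<and> S \<subseteq> C \<longrightarrow> Upsilon U S \<subseteq> C)"
  then show "down_closed (Upsilon U S)" unfolding U_ideal_def by blast
next
  assume dc: "down_closed (Upsilon U S)"
  have sing: "join {s} = s" for s :: 'a
    by (rule join_eq) (simp add: is_join_def)
  have A: "S \<subseteq> Upsilon U S"
  proof
    fix s assume s: "s \<in> S"
    have "{s} \<in> Uplus U"
      unfolding Uplus_def has_join_def
      using sing[of s] Gamma_mem[of s U "{s}"] by (auto simp: is_join_def)
    moreover have "{s} \<subseteq> down S" using s by (auto simp: down_def)
    ultimately show "s \<in> Upsilon U S" unfolding Upsilon_def using sing[of s] by force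
  qed
  have B: "Upsilon U S \<subseteq> C" if C: "U_ideal U C" "S \<subseteq> C" for C
  proof
    fix x assume "x \<in> Upsilon U S"
    then obtain T where T: "x = join T" "T \<in> Uplus U" "T \<subseteq> down S"
      unfolding Upsilon_def by blast
    have "T \<subseteq> C" using T(3) C unfolding down_def U_ideal_def down_closed_def by blast
    then show "x \<in> C" using T C unfolding Uplus_def Gamma_mem by blast
  qed
  have D: "join S' \<in> Upsilon U S" if S': "S' \<in> U" "S' \<subseteq> Upsilon U S" for S'
  proof -
    have "\<forall>x\<in>S'. \<exists>T. x = join T \<and> T \<in> Uplus U \<and> T \<subseteq> down S"
      using S'(2) unfolding Upsilon_def by blast
    then obtain f where f: "\<And>x. x \<in> S' \<Longrightarrow> x = join (f x) \<and> f x \<in> Uplus U \<and> f x \<subseteq> down S"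
      by metis
    define T where "T = \<Union>(f ` S')"
    have TS: "T \<subseteq> down S" using f unfolding T_def by blast
    have jS': "is_join S' (join S')" using assms S'(1) has_join_is_join unfolding join_spec_def by blast
    have jf: "is_join (f x) x" if "x \<in> S'" for x
    proof -
      have "has_join (f x)" "x = join (f x)" using f[OF that] unfolding Uplus_def by auto
      then show ?thesis using has_join_is_join[of "f x"] by simp
    qed
    have jT: "is_join T (join S')"
      unfolding is_join_def
    proof safe
      fix t assume "t \<in> T"
      then obtain x where x: "x \<in> S'" "t \<in> f x" unfolding T_def by blast
      have "t \<le> x" using jf[OF x(1)] x(2) unfolding is_join_def by blast
      also have "x \<le> join S'" using jS' x(1) unfolding is_join_def by blast
      finally show "t \<le> join S'" .
    next
      fix y assume y: "\<forall>s\<in>T. s \<le> y"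
      have "\<forall>x\<in>S'. x \<le> y"
      proof
        fix x assume x: "x \<in> S'"
        have "\<forall>s\<in>f x. s \<le> y" using y x unfolding T_def by blast
        then show "x \<le> y" using jf[OF x] unfolding is_join_def by blast
      qed
      then show "join S' \<le> y" using jS' unfolding is_join_def by blast
    qed
    have "join S' \<in> Gamma U T"
      unfolding Gamma_mem
    proof safe
      fix C assume C: "U_ideal U C" "T \<subseteq> C"
      have "S' \<subseteq> C"
      proof
        fix x assume x: "x \<in> S'"
        have "f x \<subseteq> C" using C(2) x unfolding T_def by blast
        moreover have "join (f x) \<in> Gamma U (f x)" "x = join (f x)" using f[OF x] unfolding Uplus_def by auto
        ultimately show "x \<in> C" using C(1) unfolding Gamma_mem by auto
      qed
      then show "join S' \<in> C" using C(1) S'(1) unfolding U_ideal_def by blast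
    qed
    then have "T \<in> Uplus U" using jT join_eq[OF jT] unfolding Uplus_def has_join_def by auto
    then show ?thesis using TS join_eq[OF jT] unfolding Upsilon_def by (auto intro!: exI[of _ T])
  qed
  show "U_ideal U (Upsilon U S) \<and> S \<subseteq> Upsilon U S \<and>
          (\<forall>C. U_ideal U C \<and> S \<subseteq> C \<longrightarrow> Upsilon U S \<subseteq> C)"
    using A B D dc unfolding U_ideal_def by blast
qed

end
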